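(* Let $(B,\lfloor\cdot,\cdot\rfloor)$ be an SSD space with quadratic form $q$ and let $P\subset B$ be premaximally $q$-positive. Then either $\Phi_P(b)\ge q(b)$ for all $b\in B$, or $P^{\pi}=\operatorname{dom}\Phi_P$ and $P^{\pi}$ is an affine subset of $B$.
   Context: An SSD space is a pair $(B,\lfloor\cdot,\cdot\rfloor)$ with $B$ a nonzero real vector space and $\lfloor\cdot,\cdot\rfloor$ a symmetric bilinear form; $q(b)=\frac12\lfloor b,b\rfloor$. A nonempty $A\subset B$ is $q$-positive if $q(b-c)\ge0$ for all $b,c\in A$; maximally $q$-positive if $q$-positive and not properly contained in another $q$-positive set. $A^{\pi}:=\{b\in B: q(b-a)\ge0\ \forall a\in A\}$. $\Phi_A(x)=\sup_{a\in A}\{\lfloor x,a\rfloor-q(a)\}$ for nonempty $A$, and $\operatorname{dom}\Phi_A=\{x:\Phi_A(x)<+\infty\}$. A $q$-positive set $P$ is premaximally $q$-positive if there is a unique maximally $q$-positive set containing $P$. *)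

theory Defs
  imports "HOL-Analysis.Analysis"
begin

definition SSD_space :: "('b::real_vector \<Rightarrow> 'b \<Rightarrow> real) \<Rightarrow> bool" where
  "SSD_space s \<longleftrightarrow> (\<exists>b::'b. b \<noteq> 0) \<and> (\<forall>x. linear (s x)) \<and> (\<forall>y. linear (\<lambda>x. s x y))
     \<and> (\<forall>x y. s x y = s y x)"

definition qform :: "('b::real_vector \<Rightarrow> 'b \<Rightarrow> real) \<Rightarrow> 'b \<Rightarrow> real" where
  "qform s b = s b b / 2"

definition q_positive :: "('b::real_vector \<Rightarrow> 'b \<Rightarrow> real) \<Rightarrow> 'b set \<Rightarrow> bool" where
  "q_positive s A \<longleftrightarrow> A \<noteq> {} \<and> (\<forall>b\<in>A. \<forall>c\<in>A. qform s (b - c) \<ge> 0)"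

definition max_q_positive :: "('b::real_vector \<Rightarrow> 'b \<Rightarrow> real) \<Rightarrow> 'b set \<Rightarrow> bool" where
  "max_q_positive s A \<longleftrightarrow> q_positive s A \<and> (\<forall>A'. q_positive s A' \<and> A \<subseteq> A' \<longrightarrow> A' = A)"

definition premax_q_positive :: "('b::real_vector \<Rightarrow> 'b \<Rightarrow> real) \<Rightarrow> 'b set \<Rightarrow> bool" where
  "premax_q_positive s P \<longleftrightarrow> q_positive s P \<and> (\<exists>!M. max_q_positive s M \<and> P \<subseteq> M)"

definition pi_set :: "('b::real_vector \<Rightarrow> 'b \<Rightarrow> real) \<Rightarrow> 'b set \<Rightarrow> 'b set" where
  "pi_set s A = {b. \<forall>a\<in>A. qform s (b - a) \<ge> 0}"

definition Phi :: "('b::real_vector \<Rightarrow> 'b \<Rightarrow> real) \<Rightarrow> 'b set \<Rightarrow> 'b \<Rightarrow> ereal" where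
  "Phi s A x = (SUP a\<in>A. ereal (s x a - qform s a))"

definition dom_Phi :: "('b::real_vector \<Rightarrow> 'b \<Rightarrow> real) \<Rightarrow> 'b set \<Rightarrow> 'b set" where
  "dom_Phi s A = {x. Phi s A x < \<infinity>}"

end

theory Submission
  imports Defs
begin

locale bil =
  fixes s :: "'b::real_vector \<Rightarrow> 'b \<Rightarrow> real"
  assumes l1: "\<And>x. linear (s x)" and l2: "\<And>y. linear (\<lambda>x. s x y)"
    and sy: "\<And>x y. s x y = s y x"
begin

lemma addL: "s (x + y) z = s x z + s y z" using linear_add[OF l2[of z]] by simp
lemma addR: "s z (x + y) = s z x + s z y" using linear_add[OF l1[of z]] by simp
lemma diffL: "s (x - y) z = s x z - s y z" using linear_diff[OF l2[of z]] by simp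
lemma diffR: "s z (x - y) = s z x - s z y" using linear_diff[OF l1[of z]] by simp
lemma scL: "s (c *\<^sub>R x) z = c * s x z" using linear_scale[OF l2[of z]] by simp
lemma scR: "s z (c *\<^sub>R x) = c * s z x" using linear_scale[OF l1[of z]] by simp

lemma q_diff: "qform s (x - y) = qform s x - s x y + qform s y"
  unfolding qform_def by (simp add: diffL diffR sy[of y x] field_simps)

lemma q_add: "qform s (x + y) = qform s x + s x y + qform s y"
  unfolding qform_def by (simp add: addL addR sy[of y x] field_simps)

lemma q_sc: "qform s (c *\<^sub>R x) = c^2 * qform s x"
  unfolding qform_def by (simp add: scL scR power2_eq_square)

lemma q_swap: "qform s (x - y) = qform s (y - x)"
  using q_diff[of x y] q_diff[of y x] sy[of x y] by simp

end

lemma zorn_ext: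
  assumes qp: "q_positive s P'"
  shows "\<exists>M. max_q_positive s M \<and> P' \<subseteq> M"
proof -
  let ?A = "{X. q_positive s X \<and> P' \<subseteq> X}"
  have "?A \<noteq> {}" using qp by blast
  moreover have "\<Union>C \<in> ?A" if Cne: "C \<noteq> {}" and Cch: "subset.chain ?A C" for C
  proof -
    have sub: "C \<subseteq> ?A"
      using Cch unfolding subset.chain_def by auto
    have ch: "\<forall>x\<in>C. \<forall>y\<in>C. x \<subseteq> y \<or> y \<subseteq> x"
      using Cch unfolding subset_chain_def by blast
    obtain X where X: "X \<in> C" using Cne by blast
    have "P' \<subseteq> \<Union>C" using X sub by blast
    moreover have "\<Union>C \<noteq> {}" using X sub qp unfolding q_positive_def by blast
    moreover have "qform s (b - c) \<ge> 0" if bc: "b \<in> \<Union>C" "c \<in> \<Union>C" for b c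
    proof -
      obtain Y Z where "Y \<in> C" "Z \<in> C" "b \<in> Y" "c \<in> Z" using bc by blast
      then have YZ: "Y \<in> C" "Z \<in> C" "b \<in> Y" "c \<in> Z" by auto
      have "Y \<subseteq> Z \<or> Z \<subseteq> Y" using ch YZ by blast
      then obtain W where "W \<in> C" "b \<in> W" "c \<in> W" using YZ by blast
      then show ?thesis using sub unfolding q_positive_def by blast
    qed
    ultimately show ?thesis unfolding q_positive_def by blast
  qed
  ultimately obtain M where M: "M \<in> ?A" "\<forall>X\<in>?A. M \<subseteq> X \<longrightarrow> X = M"
    using subset_Zorn_nonempty[of ?A] by blast
  then show ?thesis unfolding max_q_positive_def by blast
qed

theorem mainTheorem5:
  fixes s :: "'b::real_vector \<Rightarrow> 'b \<Rightarrow> real" and P :: "'b set"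
  assumes "SSD_space s"
    and "premax_q_positive s P"
  shows "(\<forall>b. Phi s P b \<ge> ereal (qform s b))
         \<or> (pi_set s P = dom_Phi s P \<and> affine (pi_set s P))"
proof (cases "\<forall>b. Phi s P b \<ge> ereal (qform s b)")
  case True
  then show ?thesis by blast
next
  case False
  then obtain b0 where b0: "Phi s P b0 < ereal (qform s b0)" by (auto simp: not_le)
  have "bil s" using assms(1) unfolding SSD_space_def bil_def by auto
  then interpret bil s .
  have qpP: "q_positive s P" using assms(2) premax_q_positive_def by auto
  have Pne: "P \<noteq> {}" using qpP q_positive_def by auto
  obtain M where M: "max_q_positive s M" "P \<subseteq> M"
    and Muniq: "\<And>M'. max_q_positive s M' \<Longrightarrow> P \<subseteq> M' \<Longrightarrow> M' = M"
    using assms(2) unfolding premax_q_positive_def by metis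
  have q0: "qform s 0 = 0" unfolding qform_def using scL[of 0 0 0] by simp
  have piM: "pi_set s P \<subseteq> M"
  proof
    fix m assume m: "m \<in> pi_set s P"
    have "q_positive s (insert m P)"
      using m qpP q_swap q0 unfolding pi_set_def q_positive_def by auto
    then obtain M' where "max_q_positive s M'" "insert m P \<subseteq> M'" using zorn_ext by blast
    then show "m \<in> M" using Muniq by auto
  qed
  have piq: "\<And>x y. x \<in> pi_set s P \<Longrightarrow> y \<in> pi_set s P \<Longrightarrow> qform s (x - y) \<ge> 0"
    using piM M(1) unfolding max_q_positive_def q_positive_def by blast
  have PsubPi: "P \<subseteq> pi_set s P" using qpP unfolding q_positive_def pi_set_def by auto
  have up: "\<And>x a. a \<in> P \<Longrightarrow> ereal (s x a - qform s a) \<le> Phi s P x"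
    unfolding Phi_def by (rule SUP_upper)
  have realb: "\<exists>r. Phi s P x = ereal r \<and> (\<forall>a\<in>P. s x a - qform s a \<le> r)"
    if fin: "Phi s P x < \<infinity>" for x
  proof -
    obtain a0 where a0: "a0 \<in> P" using Pne by blast
    have "Phi s P x \<noteq> -\<infinity>" using up[OF a0, of x] by auto
    then obtain r where r: "Phi s P x = ereal r" using fin by (cases "Phi s P x") auto
    show ?thesis using r up by (intro exI[of _ r]) (metis ereal_less_eq(3))
  qed
  obtain r where r: "Phi s P b0 = ereal r" "\<forall>a\<in>P. s b0 a - qform s a \<le> r"
  proof -
    have "Phi s P b0 < \<infinity>" using b0 by (cases "Phi s P b0") auto
    then show ?thesis using realb[of b0] that by blast
  qed
  define \<delta> where "\<delta> = qform s b0 - r"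
  have dpos: "\<delta> > 0" using r(1) b0 \<delta>_def by auto
  have qd: "qform s (a - b0) \<ge> \<delta>" if "a \<in> P" for a
    using r(2) that q_swap[of a b0] q_diff[of b0 a] \<delta>_def by auto
  define D where "D c \<longleftrightarrow> (\<exists>L>0. \<forall>a\<in>P. s c (a - b0) \<le> L * qform s (a - b0))" for c
  have Dbound: "D c" if K: "\<And>a. a \<in> P \<Longrightarrow> s c (a - b0) \<le> K + qform s (a - b0)" for c K
  proof -
    have "s c (a - b0) \<le> (\<bar>K\<bar> / \<delta> + 1) * qform s (a - b0)" if a: "a \<in> P" for a
    proof -
      have "1 \<le> qform s (a - b0) / \<delta>" using qd[OF a] dpos by simp
      then have "\<bar>K\<bar> * 1 \<le> \<bar>K\<bar> * (qform s (a - b0) / \<delta>)" by (intro mult_left_mono) auto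
      then have "K \<le> \<bar>K\<bar> / \<delta> * qform s (a - b0)" by simp
      then show ?thesis using K[OF a] by (simp add: distrib_right)
    qed
    moreover have "\<bar>K\<bar> / \<delta> + 1 > 0" using dpos by (simp add: add_nonneg_pos)
    ultimately show ?thesis unfolding D_def by blast
  qed
  have Dpi: "b0 + \<epsilon> *\<^sub>R c \<in> pi_set s P"
    if L: "\<forall>a\<in>P. s c (a - b0) \<le> L * qform s (a - b0)" and e: "0 < \<epsilon>" "\<epsilon> \<le> 1"
      "\<epsilon> * L \<le> 1/2" "\<epsilon> * \<bar>qform s c\<bar> \<le> \<delta>/2" for c L \<epsilon>
    unfolding pi_set_def
  proof (intro CollectI ballI)
    fix a assume a: "a \<in> P"
    have eq: "b0 + \<epsilon> *\<^sub>R c - a = \<epsilon> *\<^sub>R c - (a - b0)" by (simp add: algebra_simps)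
    have Q: "qform s (a - b0) \<ge> 0" using qd[OF a] dpos by linarith
    have "\<epsilon> * s c (a - b0) \<le> \<epsilon> * (L * qform s (a - b0))"
      using L a e(1) by (intro mult_left_mono) auto
    also have "\<dots> = (\<epsilon> * L) * qform s (a - b0)" by simp
    also have "\<dots> \<le> 1/2 * qform s (a - b0)" using e(3) Q by (intro mult_right_mono) auto
    finally have A: "\<epsilon> * s c (a - b0) \<le> 1/2 * qform s (a - b0)" .
    have "\<epsilon>^2 * \<bar>qform s c\<bar> \<le> \<epsilon> * \<bar>qform s c\<bar>"
      using e(1,2) mult_right_mono[of \<epsilon> 1 "\<epsilon> * \<bar>qform s c\<bar>"] by (simp add: power2_eq_square)
    moreover have "\<bar>\<epsilon>^2 * qform s c\<bar> = \<epsilon>^2 * \<bar>qform s c\<bar>" by (simp add: abs_mult)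
    moreover have "- \<bar>\<epsilon>^2 * qform s c\<bar> \<le> \<epsilon>^2 * qform s c"
      using abs_ge_minus_self[of "\<epsilon>^2 * qform s c"] by linarith
    ultimately have B: "\<epsilon>^2 * qform s c \<ge> -\<delta>/2" using e(4) by linarith
    have "qform s (b0 + \<epsilon> *\<^sub>R c - a) = \<epsilon>^2 * qform s c - \<epsilon> * s c (a - b0) + qform s (a - b0)"
      unfolding eq q_diff q_sc scL by simp
    then show "qform s (b0 + \<epsilon> *\<^sub>R c - a) \<ge> 0" using A B qd[OF a] by linarith
  qed
  have Dq: "qform s (c - d) \<ge> 0" if "D c" "D d" for c d
  proof -
    obtain L1 where L1: "L1 > 0" "\<forall>a\<in>P. s c (a - b0) \<le> L1 * qform s (a - b0)"
      using \<open>D c\<close> D_def by auto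
    obtain L2 where L2: "L2 > 0" "\<forall>a\<in>P. s d (a - b0) \<le> L2 * qform s (a - b0)"
      using \<open>D d\<close> D_def by auto
    define L where "L = max L1 L2"
    have Lp: "L > 0" using L1 L_def by auto
    have Q: "qform s (a - b0) \<ge> 0" if "a \<in> P" for a using qd[OF that] dpos by linarith
    have Lc: "\<forall>a\<in>P. s c (a - b0) \<le> L * qform s (a - b0)"
    proof
      fix a assume a: "a \<in> P"
      have "L1 * qform s (a - b0) \<le> L * qform s (a - b0)"
        using Q[OF a] L_def by (intro mult_right_mono) auto
      moreover have "s c (a - b0) \<le> L1 * qform s (a - b0)" using L1(2) a by blast
      ultimately show "s c (a - b0) \<le> L * qform s (a - b0)" by linarith
    qed
    have Ld: "\<forall>a\<in>P. s d (a - b0) \<le> L * qform s (a - b0)"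
    proof
      fix a assume a: "a \<in> P"
      have "L2 * qform s (a - b0) \<le> L * qform s (a - b0)"
        using Q[OF a] L_def by (intro mult_right_mono) auto
      moreover have "s d (a - b0) \<le> L2 * qform s (a - b0)" using L2(2) a by blast
      ultimately show "s d (a - b0) \<le> L * qform s (a - b0)" by linarith
    qed
    define e where "e = min (min 1 (1/(2*L))) (min (\<delta>/(2*(\<bar>qform s c\<bar>+1))) (\<delta>/(2*(\<bar>qform s d\<bar>+1))))"
    have ep: "e > 0" using Lp dpos e_def by (simp add: add_pos_nonneg)
    have e1: "e \<le> 1" unfolding e_def by (meson min.cobounded1 order_trans)
    have e2: "e \<le> 1/(2*L)" unfolding e_def by (meson min.cobounded1 min.cobounded2 order_trans)
    have e3: "e \<le> \<delta>/(2*(\<bar>qform s c\<bar>+1))" unfolding e_def by (meson min.cobounded1 min.cobounded2 order_trans)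
    have e4: "e \<le> \<delta>/(2*(\<bar>qform s d\<bar>+1))" unfolding e_def by (meson min.cobounded2 order_trans)
    have eL: "e * L \<le> 1/2"
    proof -
      have "e * L \<le> (1/(2*L)) * L" using e2 Lp by (intro mult_right_mono) auto
      then show ?thesis using Lp by simp
    qed
    have eq: "e * \<bar>qform s x\<bar> \<le> \<delta>/2" if "e \<le> \<delta>/(2*(\<bar>qform s x\<bar>+1))" for x
    proof -
      have "e * \<bar>qform s x\<bar> \<le> \<delta>/(2*(\<bar>qform s x\<bar>+1)) * \<bar>qform s x\<bar>"
        using that by (intro mult_right_mono) auto
      also have "\<dots> \<le> \<delta>/(2*(\<bar>qform s x\<bar>+1)) * (\<bar>qform s x\<bar> + 1)"
        using dpos by (intro mult_left_mono) auto
      also have "\<dots> = \<delta>/2"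
      proof -
        have "\<bar>qform s x\<bar> + 1 > 0" by (simp add: add_nonneg_pos)
        then show ?thesis by (simp add: field_simps)
      qed
      finally show ?thesis .
    qed
    have ec: "e * \<bar>qform s c\<bar> \<le> \<delta>/2" by (rule eq[OF e3])
    have ed: "e * \<bar>qform s d\<bar> \<le> \<delta>/2" by (rule eq[OF e4])
    have "qform s ((b0 + e *\<^sub>R c) - (b0 + e *\<^sub>R d)) \<ge> 0"
      using piq Dpi[OF Lc ep e1 eL ec] Dpi[OF Ld ep e1 eL ed] by blast
    moreover have "(b0 + e *\<^sub>R c) - (b0 + e *\<^sub>R d) = e *\<^sub>R (c - d)" by (simp add: algebra_simps)
    ultimately have "e^2 * qform s (c - d) \<ge> 0" using q_sc by simp
    then show ?thesis using ep by (simp add: zero_le_mult_iff)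
  qed
  have Dadd: "D (c + d)" if "D c" "D d" for c d
  proof -
    obtain L1 where L1: "L1 > 0" "\<forall>a\<in>P. s c (a - b0) \<le> L1 * qform s (a - b0)"
      using \<open>D c\<close> D_def by auto
    obtain L2 where L2: "L2 > 0" "\<forall>a\<in>P. s d (a - b0) \<le> L2 * qform s (a - b0)"
      using \<open>D d\<close> D_def by auto
    have "\<forall>a\<in>P. s (c + d) (a - b0) \<le> (L1 + L2) * qform s (a - b0)"
      using L1 L2 by (auto simp: addL distrib_right intro: add_mono)
    then show ?thesis unfolding D_def using L1 L2 by (intro exI[of _ "L1+L2"]) auto
  qed
  have Dsc: "D (t *\<^sub>R c)" if "D c" "t \<ge> 0" for c t
  proof -
    obtain L1 where L1: "L1 > 0" "\<forall>a\<in>P. s c (a - b0) \<le> L1 * qform s (a - b0)"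
      using \<open>D c\<close> D_def by auto
    have "\<forall>a\<in>P. s (t *\<^sub>R c) (a - b0) \<le> (t * L1 + 1) * qform s (a - b0)"
    proof
      fix a assume a: "a \<in> P"
      have Q: "qform s (a - b0) \<ge> 0" using qd[OF a] dpos by linarith
      have "t * s c (a - b0) \<le> t * (L1 * qform s (a - b0))"
        using L1 a that(2) by (intro mult_left_mono) auto
      then show "s (t *\<^sub>R c) (a - b0) \<le> (t * L1 + 1) * qform s (a - b0)"
        using Q by (simp add: scL distrib_right)
    qed
    moreover have "t * L1 + 1 > 0" using L1 that(2) by (simp add: add_nonneg_pos)
    ultimately show ?thesis unfolding D_def by blast
  qed
  have PiD: "D (m - b0)" if "m \<in> pi_set s P" for m
  proof (rule Dbound[of _ "qform s (m - b0)"])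
    fix a assume a: "a \<in> P"
    have "qform s ((m - b0) - (a - b0)) \<ge> 0" using that a unfolding pi_set_def by simp
    then show "s (m - b0) (a - b0) \<le> qform s (m - b0) + qform s (a - b0)"
      unfolding q_diff by simp
  qed
  have inPi: "x \<in> pi_set s P" if "D (x - b0)" for x
    unfolding pi_set_def
  proof (intro CollectI ballI)
    fix a assume a: "a \<in> P"
    have "qform s ((x - b0) - (a - b0)) \<ge> 0" using Dq that PiD PsubPi a by blast
    then show "qform s (x - a) \<ge> 0" by simp
  qed
  have domD: "D (x - b0)" if xd: "x \<in> dom_Phi s P" for x
  proof -
    obtain C where C: "\<forall>a\<in>P. s x a - qform s a \<le> C"
      using realb[of x] xd unfolding dom_Phi_def by auto
    show ?thesis
    proof (rule Dbound[of _ "C - s x b0 + qform s b0"])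
      fix a assume a: "a \<in> P"
      have e1: "s (x - b0) (a - b0) = s x a - s x b0 - s b0 a + s b0 b0"
        by (simp add: diffL diffR)
      have e2: "s b0 a = qform s b0 + qform s a - qform s (a - b0)"
        using q_diff[of b0 a] q_swap[of b0 a] by simp
      have e3: "s b0 b0 = 2 * qform s b0" unfolding qform_def by simp
      show "s (x - b0) (a - b0) \<le> C - s x b0 + qform s b0 + qform s (a - b0)"
        unfolding e1 e2 e3 using C a by auto
    qed
  qed
  have eqd: "pi_set s P = dom_Phi s P"
  proof
    show "pi_set s P \<subseteq> dom_Phi s P"
    proof
      fix m assume m: "m \<in> pi_set s P"
      have "Phi s P m \<le> ereal (qform s m)"
        unfolding Phi_def
      proof (rule SUP_least)
        fix a assume a: "a \<in> P"
        have "qform s (m - a) \<ge> 0" using m a unfolding pi_set_def by simp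
        then show "ereal (s m a - qform s a) \<le> ereal (qform s m)"
          unfolding q_diff by simp
      qed
      then show "m \<in> dom_Phi s P" unfolding dom_Phi_def
        using le_less_trans by fastforce
    qed
    show "dom_Phi s P \<subseteq> pi_set s P" using domD inPi by blast
  qed
  have aff: "affine (pi_set s P)"
    unfolding affine_def
  proof (intro ballI allI impI)
    fix x y and u v :: real assume x: "x \<in> pi_set s P" and y: "y \<in> pi_set s P" and uv: "u + v = 1"
    define c where "c = max u 0 *\<^sub>R (x - b0) + max v 0 *\<^sub>R (y - b0)"
    define d where "d = max (-u) 0 *\<^sub>R (x - b0) + max (-v) 0 *\<^sub>R (y - b0)"
    have Dc: "D c" unfolding c_def using Dadd Dsc PiD x y by simp
    have Dd: "D d" unfolding d_def using Dadd Dsc PiD x y by simp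
    have mu: "max u 0 - max (-u) 0 = u" "max v 0 - max (-v) 0 = v" by auto
    have "c - d = (max u 0 - max (-u) 0) *\<^sub>R (x - b0) + (max v 0 - max (-v) 0) *\<^sub>R (y - b0)"
      unfolding c_def d_def by (simp add: algebra_simps)
    also have "\<dots> = u *\<^sub>R x + v *\<^sub>R y - (u + v) *\<^sub>R b0" unfolding mu by (simp add: algebra_simps)
    finally have cd: "c - d = u *\<^sub>R x + v *\<^sub>R y - b0" using uv by simp
    show "u *\<^sub>R x + v *\<^sub>R y \<in> pi_set s P"
      unfolding pi_set_def
    proof (intro CollectI ballI)
      fix a assume a: "a \<in> P"
      have "D (d + (a - b0))" using Dadd Dd PiD PsubPi a by blast
      then have "qform s (c - (d + (a - b0))) \<ge> 0" using Dq Dc by blast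
      moreover have "c - (d + (a - b0)) = u *\<^sub>R x + v *\<^sub>R y - a"
        using cd by (simp add: algebra_simps)
      ultimately show "qform s (u *\<^sub>R x + v *\<^sub>R y - a) \<ge> 0" by simp
    qed
  qed
  show ?thesis using eqd aff by blast
qed

end
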